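(* Let $\rho$ be an operator on $h$ and let $\rho_0$ denote $\rho$ on slice $0$. Let $\mathcal H_E\cong\mathcal H$ be an environment, $|\Phi^+\rangle=\sum_{\mathbf i}|\mathbf i\rangle|\mathbf i\rangle_E$ (sum over the product basis), and for an operator $A$ on $\mathcal H$ let $$|\mathbf A\rangle:=(A\otimes\mathbb 1_E)|\Phi^+\rangle$$ be its Choi vector. Then, for all operators $O^{(0)},\dots,O^{(N-1)}$ on $h$, $$\Big\langle\big(\textstyle\bigotimes_tO^{(t)}_t\big)^\dagger\Big|\rho_0e^{i\tilde{\mathcal S}}\Big\rangle=\mathrm{tr}\big[\rho\,O^{(N-1)}(\epsilon(N-1))\cdots O^{(1)}(\epsilon)\,O^{(0)}(0)\big],$$ where the left side is the inner product of the Choi vectors of $\big(\bigotimes_tO^{(t)}_t\big)^\dagger$ and of $\rho_0e^{i\tilde{\mathcal S}}$, and $O(s)=e^{isH}Oe^{-isH}$.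
   Context: Bosonic-like setting. Fix integers $d\ge1$, $N\ge1$, a real $\epsilon>0$, and set $T=\epsilon N$. Let $h$ be a $d$-dimensional Hilbert space with orthonormal basis $\{|i\rangle\}$ and trace $\mathrm{tr}$. The space $\mathcal H$. Let $\mathcal H=h^{\otimes N}$, with factors indexed by slices $t=0,\dots,N-1$. $A_t$ denotes $A$ acting on factor $t$, and $\bigotimes_tO^{(t)}_t=O^{(0)}\otimes\dots\otimes O^{(N-1)}$. Quantum action. Let $C$ be the cyclic shift $C|i_0\dots i_{N-1}\rangle=|i_{N-1}i_0\dots i_{N-2}\rangle$, and let $H$ be a hermitian operator on $h$. Define $$e^{i\mathcal S}=C\prod_te^{-i\epsilon H_t},\qquad e^{i\tilde{\mathcal S}}:=e^{iTH_0}e^{i\mathcal S}.$$ *)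

theory Defs
  imports "HOL-Analysis.Analysis"
begin

text \<open>Operators on a finite-dimensional Hilbert space with orthonormal basis indexed by a
finite set I are represented by their matrix entries A x y = <x|A|y> (entries outside I
are irrelevant).\<close>

definition mmult :: "'i set \<Rightarrow> ('i \<Rightarrow> 'i \<Rightarrow> complex) \<Rightarrow> ('i \<Rightarrow> 'i \<Rightarrow> complex) \<Rightarrow> ('i \<Rightarrow> 'i \<Rightarrow> complex)" where
  "mmult I A B = (\<lambda>x y. \<Sum>k\<in>I. A x k * B k y)"

definition mone :: "'i \<Rightarrow> 'i \<Rightarrow> complex" where
  "mone = (\<lambda>x y. if x = y then 1 else 0)"

definition mscale :: "complex \<Rightarrow> ('i \<Rightarrow> 'i \<Rightarrow> complex) \<Rightarrow> ('i \<Rightarrow> 'i \<Rightarrow> complex)" where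
  "mscale c A = (\<lambda>x y. c * A x y)"

definition madj :: "('i \<Rightarrow> 'i \<Rightarrow> complex) \<Rightarrow> ('i \<Rightarrow> 'i \<Rightarrow> complex)" where
  "madj A = (\<lambda>x y. cnj (A y x))"

definition mtrace :: "'i set \<Rightarrow> ('i \<Rightarrow> 'i \<Rightarrow> complex) \<Rightarrow> complex" where
  "mtrace I A = (\<Sum>x\<in>I. A x x)"

fun mpow :: "'i set \<Rightarrow> ('i \<Rightarrow> 'i \<Rightarrow> complex) \<Rightarrow> nat \<Rightarrow> ('i \<Rightarrow> 'i \<Rightarrow> complex)" where
  "mpow I A 0 = mone"
| "mpow I A (Suc n) = mmult I (mpow I A n) A"

definition mexp :: "'i set \<Rightarrow> ('i \<Rightarrow> 'i \<Rightarrow> complex) \<Rightarrow> ('i \<Rightarrow> 'i \<Rightarrow> complex)" where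
  "mexp I A = (\<lambda>x y. \<Sum>k. mpow I A k x y / of_nat (fact k))"

definition mprod :: "'i set \<Rightarrow> ('i \<Rightarrow> 'i \<Rightarrow> complex) list \<Rightarrow> ('i \<Rightarrow> 'i \<Rightarrow> complex)" where
  "mprod I As = foldr (mmult I) As mone"

text \<open>Single-site space h: basis {0..<d}. Many-body space h^{\<otimes>N}: basis = lists
[i_0,...,i_{N-1}] with i_t < d.\<close>
definition sbasis :: "nat \<Rightarrow> nat set" where
  "sbasis d = {..<d}"

definition tbasis :: "nat \<Rightarrow> nat \<Rightarrow> nat list set" where
  "tbasis d N = {xs. length xs = N \<and> set xs \<subseteq> {..<d}}"

definition local_op :: "nat \<Rightarrow> nat \<Rightarrow> (nat \<Rightarrow> nat \<Rightarrow> complex) \<Rightarrow> (nat list \<Rightarrow> nat list \<Rightarrow> complex)" where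
  "local_op N t A = (\<lambda>xs ys. A (xs ! t) (ys ! t) *
      (\<Prod>s\<in>{..<N} - {t}. if xs ! s = ys ! s then 1 else 0))"

definition tensor_op :: "nat \<Rightarrow> (nat \<Rightarrow> nat \<Rightarrow> nat \<Rightarrow> complex) \<Rightarrow> (nat list \<Rightarrow> nat list \<Rightarrow> complex)" where
  "tensor_op N Os = (\<lambda>xs ys. \<Prod>t<N. Os t (xs ! t) (ys ! t))"

definition cshift :: "nat list \<Rightarrow> nat list \<Rightarrow> complex" where
  "cshift = (\<lambda>xs ys. if xs = last ys # butlast ys then 1 else 0)"

definition expiS :: "nat \<Rightarrow> nat \<Rightarrow> real \<Rightarrow> (nat \<Rightarrow> nat \<Rightarrow> complex) \<Rightarrow> (nat list \<Rightarrow> nat list \<Rightarrow> complex)" where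
  "expiS d N \<epsilon> H = mmult (tbasis d N) cshift
     (mprod (tbasis d N)
        (map (\<lambda>t. mexp (tbasis d N) (mscale (- \<i> * complex_of_real \<epsilon>) (local_op N t H))) [0..<N]))"

definition expiS_tilde :: "nat \<Rightarrow> nat \<Rightarrow> real \<Rightarrow> (nat \<Rightarrow> nat \<Rightarrow> complex) \<Rightarrow> (nat list \<Rightarrow> nat list \<Rightarrow> complex)" where
  "expiS_tilde d N \<epsilon> H = mmult (tbasis d N)
     (mexp (tbasis d N) (mscale (\<i> * complex_of_real (\<epsilon> * real N)) (local_op N 0 H)))
     (expiS d N \<epsilon> H)"

definition heis :: "nat \<Rightarrow> (nat \<Rightarrow> nat \<Rightarrow> complex) \<Rightarrow> real \<Rightarrow> (nat \<Rightarrow> nat \<Rightarrow> complex) \<Rightarrow> (nat \<Rightarrow> nat \<Rightarrow> complex)" where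
  "heis d H s A = mmult (sbasis d)
     (mmult (sbasis d) (mexp (sbasis d) (mscale (\<i> * complex_of_real s) H)) A)
     (mexp (sbasis d) (mscale (- \<i> * complex_of_real s) H))"

text \<open>System \<otimes> environment H \<otimes> H_E with H_E \<cong> H: basis pairs (x, e).
|\<Phi>+> = \<Sum>_i |i>|i>_E, and (A \<otimes> 1_E) acting on a vector.\<close>
definition phi_plus :: "'i set \<Rightarrow> ('i \<times> 'i \<Rightarrow> complex)" where
  "phi_plus I = (\<lambda>(x, e). if x \<in> I \<and> x = e then 1 else 0)"

definition apply_sys :: "'i set \<Rightarrow> ('i \<Rightarrow> 'i \<Rightarrow> complex) \<Rightarrow> ('i \<times> 'i \<Rightarrow> complex) \<Rightarrow> ('i \<times> 'i \<Rightarrow> complex)" where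
  "apply_sys I A v = (\<lambda>(x, e). \<Sum>y\<in>I. A x y * v (y, e))"

definition choi :: "'i set \<Rightarrow> ('i \<Rightarrow> 'i \<Rightarrow> complex) \<Rightarrow> ('i \<times> 'i \<Rightarrow> complex)" where
  "choi I A = apply_sys I A (phi_plus I)"

definition vinner :: "'i set \<Rightarrow> ('i \<times> 'i \<Rightarrow> complex) \<Rightarrow> ('i \<times> 'i \<Rightarrow> complex) \<Rightarrow> complex" where
  "vinner I u v = (\<Sum>p\<in>I \<times> I. cnj (u p) * v p)"

end

theory Submission imports Defs begin

definition eqon :: "'i set \<Rightarrow> ('i \<Rightarrow> 'i \<Rightarrow> complex) \<Rightarrow> ('i \<Rightarrow> 'i \<Rightarrow> complex) \<Rightarrow> bool" where
  "eqon I A B \<longleftrightarrow> (\<forall>x\<in>I. \<forall>y\<in>I. A x y = B x y)"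

lemma eqonD: "eqon I A B \<Longrightarrow> x \<in> I \<Longrightarrow> y \<in> I \<Longrightarrow> A x y = B x y"
  by (simp add: eqon_def)
lemma eqonI: "(\<And>x y. x \<in> I \<Longrightarrow> y \<in> I \<Longrightarrow> A x y = B x y) \<Longrightarrow> eqon I A B"
  by (simp add: eqon_def)
lemma eqon_refl[simp]: "eqon I A A" by (simp add: eqon_def)
lemma eqon_sym: "eqon I A B \<Longrightarrow> eqon I B A" by (simp add: eqon_def)
lemma eqon_trans[trans]: "eqon I A B \<Longrightarrow> eqon I B C \<Longrightarrow> eqon I A C" by (simp add: eqon_def)
lemma eqon_eq_trans[trans]: "A = B \<Longrightarrow> eqon I B C \<Longrightarrow> eqon I A C" by simp
lemma eqon_trans_eq[trans]: "eqon I A B \<Longrightarrow> B = C \<Longrightarrow> eqon I A C" by simp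

lemma mmult_cong: "eqon I A A' \<Longrightarrow> eqon I B B' \<Longrightarrow> eqon I (mmult I A B) (mmult I A' B')"
  unfolding eqon_def mmult_def by (auto intro!: sum.cong)

lemma mmult_assoc: "mmult I (mmult I A B) C = mmult I A (mmult I B C)"
  unfolding mmult_def
  apply (simp add: sum_distrib_left sum_distrib_right mult.assoc)
  apply (rule ext)+
  apply (rule sum.swap)
  done

lemma mmult_one_left: "finite I \<Longrightarrow> eqon I (mmult I mone A) A"
  unfolding eqon_def mmult_def mone_def by (simp add: if_distrib[of "\<lambda>c. c * _"] if_distrib[of "\<lambda>c. _ * c"] cong: if_cong)
lemma mmult_one_right: "finite I \<Longrightarrow> eqon I (mmult I A mone) A"
  unfolding eqon_def mmult_def mone_def by (simp add: if_distrib[of "\<lambda>c. c * _"] if_distrib[of "\<lambda>c. _ * c"] cong: if_cong)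

lemma mtrace_comm: "mtrace I (mmult I A B) = mtrace I (mmult I B A)"
  unfolding mtrace_def mmult_def by (auto simp: mult.commute intro: sum.swap)

lemma mtrace_cong: "eqon I A B \<Longrightarrow> mtrace I A = mtrace I B"
  unfolding mtrace_def eqon_def by simp

lemma mprod_Cons: "mprod I (A # As) = mmult I A (mprod I As)"
  by (simp add: mprod_def)
lemma mprod_Nil: "mprod I [] = mone"
  by (simp add: mprod_def)

lemma foldr_mmult: assumes fin: "finite I" shows "eqon I (foldr (mmult I) xs Z) (mmult I (mprod I xs) Z)"
proof (induction xs)
  case Nil
  then show ?case by (simp add: mprod_def eqon_sym[OF mmult_one_left[OF fin]])
next
  case (Cons a xs)
  have "eqon I (mmult I a (foldr (mmult I) xs Z)) (mmult I a (mmult I (mprod I xs) Z))"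
    by (rule mmult_cong[OF eqon_refl Cons])
  then show ?case by (simp add: mprod_Cons mmult_assoc)
qed

lemma mprod_append: "finite I \<Longrightarrow> eqon I (mprod I (xs @ ys)) (mmult I (mprod I xs) (mprod I ys))"
  by (simp add: mprod_def foldr_mmult[unfolded mprod_def])

lemma mprod_single: "finite I \<Longrightarrow> eqon I (mprod I [A]) A"
  by (simp add: mprod_def mmult_one_right)

lemma mprod_cong: "(\<And>x. x \<in> set xs \<Longrightarrow> eqon I (f x) (g x)) \<Longrightarrow> eqon I (mprod I (map f xs)) (mprod I (map g xs))"
  by (induction xs) (auto simp: mprod_Cons mprod_Nil intro: mmult_cong)


lemma tbasis_0: "tbasis d 0 = {[]}"
  by (auto simp: tbasis_def)

lemma tbasis_Suc: "tbasis d (Suc n) = (\<lambda>(x, r). x # r) ` ({..<d} \<times> tbasis d n)"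
  by (auto simp: tbasis_def length_Suc_conv image_iff)

lemma finite_tbasis[simp]: "finite (tbasis d n)"
  by (induction n) (auto simp: tbasis_0 tbasis_Suc)

lemma sum_tbasis_Suc: "(\<Sum>k\<in>tbasis d (Suc n). g k) = (\<Sum>x<d. \<Sum>r\<in>tbasis d n. g (x # r))"
proof -
  have "inj_on (\<lambda>(x, r). x # r) ({..<d} \<times> tbasis d n)" by (auto simp: inj_on_def)
  then have "(\<Sum>k\<in>tbasis d (Suc n). g k) = (\<Sum>(x,r)\<in>{..<d} \<times> tbasis d n. g (x # r))"
    unfolding tbasis_Suc by (subst sum.reindex) (simp_all add: comp_def prod.case_distrib)
  also have "\<dots> = (\<Sum>x<d. \<Sum>r\<in>tbasis d n. g (x # r))"
    by (simp add: sum.cartesian_product)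
  finally show ?thesis .
qed

lemma tbasis_nth: "xs \<in> tbasis d N \<Longrightarrow> t < N \<Longrightarrow> xs ! t < d"
  by (auto simp: tbasis_def dest!: nth_mem)

lemma tbasis_len: "xs \<in> tbasis d N \<Longrightarrow> length xs = N"
  by (auto simp: tbasis_def)

lemma sum_prod_tbasis: fixes F :: "nat \<Rightarrow> nat \<Rightarrow> complex" shows "(\<Sum>k\<in>tbasis d n. \<Prod>t<n. F t (k ! t)) = (\<Prod>t<n. \<Sum>j<d. F t j)"
proof (induction n arbitrary: F)
  case 0
  then show ?case by (simp add: tbasis_0)
next
  case (Suc n)
  have "(\<Sum>k\<in>tbasis d (Suc n). \<Prod>t<Suc n. F t (k ! t))
      = (\<Sum>x<d. \<Sum>r\<in>tbasis d n. F 0 x * (\<Prod>t<n. F (Suc t) (r ! t)))"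
    by (simp add: sum_tbasis_Suc prod.lessThan_Suc_shift del: prod.lessThan_Suc)
  also have "\<dots> = (\<Sum>x<d. F 0 x * (\<Sum>r\<in>tbasis d n. \<Prod>t<n. F (Suc t) (r ! t)))"
    by (rule sum.cong[OF refl]) (rule sum_distrib_left[symmetric])
  also have "\<dots> = (\<Sum>x<d. F 0 x) * (\<Prod>t<n. \<Sum>j<d. F (Suc t) j)"
    by (simp add: Suc.IH[of "\<lambda>t. F (Suc t)"] sum_distrib_right)
  also have "\<dots> = (\<Prod>t<Suc n. \<Sum>j<d. F t j)"
    by (simp add: prod.lessThan_Suc_shift del: prod.lessThan_Suc)
  finally show ?case .
qed

lemma tensor_mult:
  assumes "xs \<in> tbasis d N" "ys \<in> tbasis d N"
  shows "mmult (tbasis d N) (tensor_op N F) (tensor_op N G) xs ys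
       = tensor_op N (\<lambda>t. mmult (sbasis d) (F t) (G t)) xs ys"
proof -
  have "mmult (tbasis d N) (tensor_op N F) (tensor_op N G) xs ys
      = (\<Sum>k\<in>tbasis d N. \<Prod>t<N. F t (xs ! t) (k ! t) * G t (k ! t) (ys ! t))"
    by (simp add: mmult_def tensor_op_def prod.distrib)
  also have "\<dots> = (\<Prod>t<N. \<Sum>j<d. F t (xs ! t) j * G t j (ys ! t))"
    by (rule sum_prod_tbasis)
  finally show ?thesis by (simp add: tensor_op_def mmult_def sbasis_def)
qed

lemma tensor_mult_eqon:
  "eqon (tbasis d N) (mmult (tbasis d N) (tensor_op N F) (tensor_op N G))
       (tensor_op N (\<lambda>t. mmult (sbasis d) (F t) (G t)))"
  by (rule eqonI) (rule tensor_mult)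

lemma tensor_cong:
  assumes "\<And>t. t < N \<Longrightarrow> eqon (sbasis d) (F t) (G t)"
  shows "eqon (tbasis d N) (tensor_op N F) (tensor_op N G)"
proof (rule eqonI)
  fix xs ys assume xs: "xs \<in> tbasis d N" and ys: "ys \<in> tbasis d N"
  show "tensor_op N F xs ys = tensor_op N G xs ys"
    unfolding tensor_op_def
    by (rule prod.cong[OF refl], rule eqonD[OF assms])
       (auto simp: sbasis_def tbasis_nth[OF xs] tbasis_nth[OF ys])
qed

lemma local_as_tensor:
  assumes "t < N"
  shows "local_op N t A = tensor_op N (\<lambda>s. if s = t then A else mone)"
proof (rule ext)+
  fix xs ys
  have "tensor_op N (\<lambda>s. if s = t then A else mone) xs ys
     = (\<Prod>s\<in>insert t ({..<N} - {t}). (if s = t then A else mone) (xs ! s) (ys ! s))"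
    using assms unfolding tensor_op_def by (simp add: insert_absorb)
  also have "\<dots> = A (xs ! t) (ys ! t) * (\<Prod>s\<in>{..<N} - {t}. mone (xs ! s) (ys ! s))"
    by (subst prod.insert) (auto intro!: prod.cong)
  finally show "local_op N t A xs ys = tensor_op N (\<lambda>s. if s = t then A else mone) xs ys"
    by (simp add: local_op_def mone_def)
qed

lemma tensor_one: "eqon (tbasis d N) (tensor_op N (\<lambda>_. mone)) mone"
proof (rule eqonI)
  fix xs ys assume xs: "xs \<in> tbasis d N" and ys: "ys \<in> tbasis d N"
  have "(\<forall>t<N. xs ! t = ys ! t) \<longleftrightarrow> xs = ys"
    using tbasis_len[OF xs] tbasis_len[OF ys] by (auto simp: list_eq_iff_nth_eq)
  then show "tensor_op N (\<lambda>_. mone) xs ys = mone xs ys"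
    unfolding tensor_op_def mone_def
    by (cases "xs = ys") (auto simp: prod_zero_iff)
qed


lemma finite_sbasis[simp]: "finite (sbasis d)" by (simp add: sbasis_def)

lemma mscale_local: "mscale c (local_op N t A) = local_op N t (mscale c A)"
  by (simp add: mscale_def local_op_def fun_eq_iff mult.assoc)

lemma mpow_local:
  assumes t: "t < N"
  shows "eqon (tbasis d N) (mpow (tbasis d N) (local_op N t A) k) (local_op N t (mpow (sbasis d) A k))"
proof (induction k)
  case 0
  have "local_op N t mone = tensor_op N (\<lambda>_. mone)"
    by (simp add: local_as_tensor[OF t])
  then show ?case using tensor_one eqon_sym by (metis mpow.simps(1))
next
  case (Suc k)
  let ?T = "tbasis d N" and ?S = "sbasis d"
  have "eqon ?T (mpow ?T (local_op N t A) (Suc k))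
          (mmult ?T (local_op N t (mpow ?S A k)) (local_op N t A))"
    by (simp add: mmult_cong[OF Suc eqon_refl])
  also have "\<dots> = mmult ?T (tensor_op N (\<lambda>s. if s = t then mpow ?S A k else mone))
                          (tensor_op N (\<lambda>s. if s = t then A else mone))"
    by (simp add: local_as_tensor[OF t])
  also have "eqon ?T \<dots> (tensor_op N (\<lambda>s. mmult ?S (if s = t then mpow ?S A k else mone) (if s = t then A else mone)))"
    by (rule tensor_mult_eqon)
  also have "eqon ?T \<dots> (tensor_op N (\<lambda>s. if s = t then mpow ?S A (Suc k) else mone))"
    by (rule tensor_cong) (auto simp: mmult_one_left)
  also have "\<dots> = local_op N t (mpow ?S A (Suc k))"
    by (simp only: local_as_tensor[OF t])
  finally show ?case .
qed

lemma local_op_delta: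
  "local_op N t M xs ys = M (xs ! t) (ys ! t) * (if \<forall>s\<in>{..<N} - {t}. xs ! s = ys ! s then 1 else 0)"
proof -
  have "(\<Prod>s\<in>{..<N} - {t}. if xs ! s = ys ! s then 1 else 0) =
        (if \<forall>s\<in>{..<N} - {t}. xs ! s = ys ! s then 1 else (0::complex))"
    by (auto simp: prod_zero_iff)
  then show ?thesis by (simp add: local_op_def)
qed

lemma mexp_local:
  assumes t: "t < N"
  shows "eqon (tbasis d N) (mexp (tbasis d N) (local_op N t A)) (local_op N t (mexp (sbasis d) A))"
proof (rule eqonI)
  fix xs ys assume xs: "xs \<in> tbasis d N" and ys: "ys \<in> tbasis d N"
  have "mexp (tbasis d N) (local_op N t A) xs ys
     = (\<Sum>k. local_op N t (mpow (sbasis d) A k) xs ys / of_nat (fact k))"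
    unfolding mexp_def using eqonD[OF mpow_local[OF t] xs ys] by simp
  also have "\<dots> = local_op N t (mexp (sbasis d) A) xs ys"
    unfolding local_op_delta mexp_def by simp
  finally show "mexp (tbasis d N) (local_op N t A) xs ys = local_op N t (mexp (sbasis d) A) xs ys" .
qed

lemma mprod_locals:
  assumes "m \<le> N"
  shows "eqon (tbasis d N) (mprod (tbasis d N) (map (\<lambda>t. local_op N t U) [m..<N]))
            (tensor_op N (\<lambda>s. if m \<le> s then U else mone))"
  using assms
proof (induction "N - m" arbitrary: m)
  case 0
  then have m: "m = N" by simp
  have "eqon (tbasis d N) (tensor_op N (\<lambda>s. if m \<le> s then U else mone)) (tensor_op N (\<lambda>_. mone))"
    using m by (auto intro!: tensor_cong)
  also have "eqon (tbasis d N) \<dots> mone" by (rule tensor_one)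
  finally show ?case using m by (simp add: mprod_Nil eqon_sym)
next
  case (Suc k)
  let ?T = "tbasis d N" and ?S = "sbasis d"
  have mN: "m < N" using Suc by simp
  have "mprod ?T (map (\<lambda>t. local_op N t U) [m..<N])
      = mmult ?T (local_op N m U) (mprod ?T (map (\<lambda>t. local_op N t U) [Suc m..<N]))"
    by (simp add: upt_conv_Cons[OF mN] mprod_Cons)
  also have "eqon ?T \<dots> (mmult ?T (tensor_op N (\<lambda>s. if s = m then U else mone))
                        (tensor_op N (\<lambda>s. if Suc m \<le> s then U else mone)))"
    using Suc.hyps(1)[of "Suc m"] Suc.hyps(2) mN
    by (intro mmult_cong) (auto simp: local_as_tensor[OF mN])
  also have "eqon ?T \<dots> (tensor_op N (\<lambda>s. mmult ?S (if s = m then U else mone) (if Suc m \<le> s then U else mone)))"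
    by (rule tensor_mult_eqon)
  also have "eqon ?T \<dots> (tensor_op N (\<lambda>s. if m \<le> s then U else mone))"
    by (rule tensor_cong) (auto simp: mmult_one_left mmult_one_right)
  finally show ?case .
qed

lemma rev_upt_Suc_Suc: "rev [0..<Suc (Suc n)] = map Suc (rev [0..<Suc n]) @ [0]"
proof -
  have "[0..<Suc (Suc n)] = 0 # map Suc [0..<Suc n]"
    by (simp only: upt_conv_Cons[of 0 "Suc (Suc n)"] map_Suc_upt zero_less_Suc)
  then show ?thesis by (simp only: rev.simps rev_map)
qed

lemma chain:
  fixes f :: "nat \<Rightarrow> nat \<Rightarrow> nat \<Rightarrow> complex"
  assumes "a < d" "b < d"
  shows "(\<Sum>r\<in>tbasis d n. \<Prod>i<Suc n. f i ((r @ [b]) ! i) ((a # r) ! i))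
       = mprod (sbasis d) (map f (rev [0..<Suc n])) b a"
  using assms(1)
proof (induction n arbitrary: a f)
  case 0
  have "mprod (sbasis d) [f 0] b a = f 0 b a"
    by (rule eqonD[OF mprod_single]) (auto simp: sbasis_def 0 assms)
  then show ?case by (simp add: tbasis_0)
next
  case (Suc n)
  let ?S = "sbasis d"
  let ?g = "\<lambda>i. f (Suc i)"
  have "(\<Sum>r\<in>tbasis d (Suc n). \<Prod>i<Suc (Suc n). f i ((r @ [b]) ! i) ((a # r) ! i))
      = (\<Sum>x<d. \<Sum>r\<in>tbasis d n. f 0 x a * (\<Prod>i<Suc n. ?g i ((r @ [b]) ! i) ((x # r) ! i)))"
    unfolding sum_tbasis_Suc
    by (subst prod.lessThan_Suc_shift) simp
  also have "\<dots> = (\<Sum>x<d. f 0 x a * (\<Sum>r\<in>tbasis d n. \<Prod>i<Suc n. ?g i ((r @ [b]) ! i) ((x # r) ! i)))"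
    by (rule sum.cong[OF refl]) (rule sum_distrib_left[symmetric])
  also have "\<dots> = (\<Sum>x<d. f 0 x a * mprod ?S (map ?g (rev [0..<Suc n])) b x)"
    by (rule sum.cong[OF refl]) (simp add: Suc.IH[of _ ?g] del: prod.lessThan_Suc upt_Suc)
  also have "\<dots> = mmult ?S (mprod ?S (map ?g (rev [0..<Suc n]))) (f 0) b a"
    by (simp add: mmult_def sbasis_def mult.commute)
  also have "\<dots> = mprod ?S (map f (rev [0..<Suc (Suc n)])) b a"
  proof -
    have e: "map f (rev [0..<Suc (Suc n)]) = map ?g (rev [0..<Suc n]) @ [f 0]"
      by (simp only: rev_upt_Suc_Suc map_append map_map) (simp add: comp_def)
    have "eqon ?S (mprod ?S (map f (rev [0..<Suc (Suc n)])))
             (mmult ?S (mprod ?S (map ?g (rev [0..<Suc n]))) (mprod ?S [f 0]))"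
      unfolding e by (rule mprod_append) simp
    also have "eqon ?S \<dots> (mmult ?S (mprod ?S (map ?g (rev [0..<Suc n]))) (f 0))"
      by (rule mmult_cong[OF eqon_refl mprod_single]) simp
    finally show ?thesis using Suc.prems assms by (auto simp: sbasis_def dest: eqonD)
  qed
  finally show ?case .
qed

lemma cshift_trace:
  fixes M :: "nat \<Rightarrow> nat \<Rightarrow> nat \<Rightarrow> complex"
  shows "mtrace (tbasis d (Suc n)) (mmult (tbasis d (Suc n)) (tensor_op (Suc n) M) cshift)
       = mtrace (sbasis d) (mprod (sbasis d) (map M (rev [0..<Suc n])))"
proof -
  let ?T = "tbasis d (Suc n)"
  let ?X = "tensor_op (Suc n) M"
  have cs: "cshift k i = (if i = tl k @ [hd k] then 1 else 0)" if "k \<in> ?T" "i \<in> ?T" for k i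
  proof -
    have k: "k \<noteq> []" and i: "i \<noteq> []" using that by (auto simp: tbasis_def)
    have "k = last i # butlast i \<longleftrightarrow> i = tl k @ [hd k]"
      using k i by (metis append_butlast_last_id butlast_snoc last_snoc list.collapse list.sel(1) list.sel(3))
    then show ?thesis by (simp add: cshift_def)
  qed
  have mem: "tl k @ [hd k] \<in> ?T" if "k \<in> ?T" for k
    using that by (cases k) (auto simp: tbasis_def)
  have "mtrace ?T (mmult ?T ?X cshift) = (\<Sum>i\<in>?T. \<Sum>k\<in>?T. ?X i k * cshift k i)"
    by (simp add: mtrace_def mmult_def)
  also have "\<dots> = (\<Sum>k\<in>?T. \<Sum>i\<in>?T. ?X i k * cshift k i)"
    by (rule sum.swap)
  also have "\<dots> = (\<Sum>k\<in>?T. ?X (tl k @ [hd k]) k)"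
  proof (rule sum.cong[OF refl])
    fix k assume k: "k \<in> ?T"
    have "(\<Sum>i\<in>?T. ?X i k * cshift k i) = (\<Sum>i\<in>?T. if i = tl k @ [hd k] then ?X i k else 0)"
      by (rule sum.cong[OF refl]) (simp add: cs[OF k])
    also have "\<dots> = ?X (tl k @ [hd k]) k" using mem[OF k] by simp
    finally show "(\<Sum>i\<in>?T. ?X i k * cshift k i) = ?X (tl k @ [hd k]) k" .
  qed
  also have "\<dots> = (\<Sum>a<d. \<Sum>r\<in>tbasis d n. \<Prod>i<Suc n. M i ((r @ [a]) ! i) ((a # r) ! i))"
    by (simp add: sum_tbasis_Suc tensor_op_def)
  also have "\<dots> = (\<Sum>a<d. mprod (sbasis d) (map M (rev [0..<Suc n])) a a)"
    by (rule sum.cong[OF refl]) (simp add: chain del: prod.lessThan_Suc upt_Suc)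
  finally show ?thesis by (simp add: mtrace_def sbasis_def)
qed


lemma mpow_scale: "mpow I (mscale c A) k = mscale (c ^ k) (mpow I A k)"
proof (induction k)
  case 0
  then show ?case by (simp add: mscale_def)
next
  case (Suc k)
  then show ?case
    by (simp add: mscale_def mmult_def sum_distrib_left fun_eq_iff mult_ac)
qed

lemma mpow_add:
  assumes fin: "finite I"
  shows "eqon I (mmult I (mpow I A m) (mpow I A n)) (mpow I A (m + n))"
proof (induction n)
  case 0
  then show ?case by (simp add: mmult_one_right[OF fin])
next
  case (Suc n)
  have "mmult I (mpow I A m) (mpow I A (Suc n)) = mmult I (mmult I (mpow I A m) (mpow I A n)) A"
    by (simp add: mmult_assoc)
  also have "eqon I \<dots> (mmult I (mpow I A (m + n)) A)"
    by (rule mmult_cong[OF Suc eqon_refl])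
  finally show ?case by simp
qed

definition mnorm :: "'i set \<Rightarrow> ('i \<Rightarrow> 'i \<Rightarrow> complex) \<Rightarrow> real" where
  "mnorm I A = (\<Sum>x\<in>I. \<Sum>y\<in>I. norm (A x y))"

lemma mnorm_ge0: "mnorm I A \<ge> 0"
  unfolding mnorm_def by (intro sum_nonneg) auto

lemma mpow_bound:
  assumes fin: "finite I" and x: "x \<in> I" and y: "y \<in> I"
  shows "norm (mpow I A n x y) \<le> mnorm I A ^ n"
  using x y
proof (induction n arbitrary: x y)
  case 0
  then show ?case by (simp add: mone_def)
next
  case (Suc n)
  have "norm (mpow I A (Suc n) x y) = norm (\<Sum>k\<in>I. mpow I A n x k * A k y)"
    by (simp add: mmult_def)
  also have "\<dots> \<le> (\<Sum>k\<in>I. norm (mpow I A n x k) * norm (A k y))"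
    by (rule order_trans[OF norm_sum]) (simp add: norm_mult)
  also have "\<dots> \<le> (\<Sum>k\<in>I. mnorm I A ^ n * norm (A k y))"
    by (rule sum_mono) (use Suc in \<open>auto intro: mult_right_mono\<close>)
  also have "\<dots> = mnorm I A ^ n * (\<Sum>k\<in>I. norm (A k y))"
    by (simp add: sum_distrib_left)
  also have "\<dots> \<le> mnorm I A ^ n * mnorm I A"
  proof (rule mult_left_mono)
    have "(\<Sum>k\<in>I. norm (A k y)) \<le> (\<Sum>k\<in>I. \<Sum>y'\<in>I. norm (A k y'))"
      by (rule sum_mono) (rule member_le_sum[OF Suc.prems(2)], auto simp: fin)
    then show "(\<Sum>k\<in>I. norm (A k y)) \<le> mnorm I A" by (simp add: mnorm_def)
  qed (simp add: mnorm_ge0)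
  finally show ?case by (simp add: mult.commute)
qed

lemma mexp_term_summable:
  assumes fin: "finite I" and x: "x \<in> I" and y: "y \<in> I"
  shows "summable (\<lambda>k. norm (c ^ k * mpow I A k x y / of_nat (fact k)))"
proof (rule summable_comparison_test'[OF summable_exp_generic[of "norm c * mnorm I A"]])
  fix k :: nat
  have "norm (c ^ k * mpow I A k x y / of_nat (fact k)) = norm c ^ k * norm (mpow I A k x y) / fact k"
    by (simp add: norm_mult norm_divide norm_power)
  also have "\<dots> \<le> norm c ^ k * mnorm I A ^ k / fact k"
    by (intro divide_right_mono mult_left_mono mpow_bound[OF fin x y]) auto
  also have "\<dots> = (norm c * mnorm I A) ^ k /\<^sub>R fact k"
    by (simp add: power_mult_distrib divide_inverse_commute)
  finally show "norm (norm (c ^ k * mpow I A k x y / of_nat (fact k))) \<le> (norm c * mnorm I A) ^ k /\<^sub>R fact k"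
    by simp
qed

lemma mexp_scale_eq:
  "mexp I (mscale c A) x y = (\<Sum>k. c ^ k * mpow I A k x y / of_nat (fact k))"
  unfolding mexp_def mpow_scale by (simp add: mscale_def)

lemma binom_term:
  fixes a b :: complex
  shows "(\<Sum>i\<le>n. a ^ i / fact i * (b ^ (n - i) / fact (n - i))) = (a + b) ^ n / fact n"
proof -
  have "(a + b) ^ n / fact n = (\<Sum>i\<le>n. of_nat (n choose i) * a ^ i * b ^ (n - i)) / fact n"
    by (simp add: binomial_ring)
  also have "\<dots> = (\<Sum>i\<le>n. of_nat (n choose i) / fact n * a ^ i * b ^ (n - i))"
    by (simp add: sum_divide_distrib mult_ac)
  also have "\<dots> = (\<Sum>i\<le>n. a ^ i / fact i * (b ^ (n - i) / fact (n - i)))"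
    by (rule sum.cong[OF refl]) (simp add: binomial_fact field_simps)
  finally show ?thesis by simp
qed

lemma mexp_add:
  assumes fin: "finite I"
  shows "eqon I (mmult I (mexp I (mscale a A)) (mexp I (mscale b A))) (mexp I (mscale (a + b) A))"
proof (rule eqonI)
  fix x y assume x: "x \<in> I" and y: "y \<in> I"
  define P where "P = mpow I A"
  define f where "f = (\<lambda>c u v k. c ^ k * P k u v / of_nat (fact k))"
  have sf: "summable (\<lambda>k. norm (f c u v k))" if "u \<in> I" "v \<in> I" for c u v
    unfolding f_def P_def by (rule mexp_term_summable[OF fin that])
  have "mmult I (mexp I (mscale a A)) (mexp I (mscale b A)) x y
      = (\<Sum>j\<in>I. (\<Sum>k. f a x j k) * (\<Sum>k. f b j y k))"
    by (simp add: mmult_def mexp_scale_eq f_def P_def)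
  also have "\<dots> = (\<Sum>j\<in>I. \<Sum>n. \<Sum>i\<le>n. f a x j i * f b j y (n - i))"
    by (rule sum.cong[OF refl]) (rule Cauchy_product[OF sf sf], auto simp: x y)
  also have "\<dots> = (\<Sum>n. \<Sum>j\<in>I. \<Sum>i\<le>n. f a x j i * f b j y (n - i))"
    by (rule suminf_sum[symmetric]) (rule summable_Cauchy_product[OF sf sf], auto simp: x y)
  also have "\<dots> = (\<Sum>n. f (a + b) x y n)"
  proof (rule arg_cong[where f = suminf], rule ext)
    fix n
    have "(\<Sum>j\<in>I. \<Sum>i\<le>n. f a x j i * f b j y (n - i))
        = (\<Sum>i\<le>n. a ^ i / fact i * (b ^ (n - i) / fact (n - i)) * (\<Sum>j\<in>I. P i x j * P (n - i) j y))"
      unfolding f_def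
      by (subst sum.swap) (simp add: sum_distrib_left sum_divide_distrib mult_ac)
    also have "\<dots> = (\<Sum>i\<le>n. a ^ i / fact i * (b ^ (n - i) / fact (n - i)) * P n x y)"
    proof (rule sum.cong[OF refl])
      fix i assume "i \<in> {..n}"
      then have "i + (n - i) = n" by simp
      then have "(\<Sum>j\<in>I. P i x j * P (n - i) j y) = P n x y"
        using eqonD[OF mpow_add[OF fin, of A i "n - i"] x y] by (simp add: P_def mmult_def)
      then show "a ^ i / fact i * (b ^ (n - i) / fact (n - i)) * (\<Sum>j\<in>I. P i x j * P (n - i) j y)
               = a ^ i / fact i * (b ^ (n - i) / fact (n - i)) * P n x y" by simp
    qed
    also have "\<dots> = (a + b) ^ n / fact n * P n x y"
      by (simp only: sum_distrib_right[symmetric] binom_term)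
    finally show "(\<Sum>j\<in>I. \<Sum>i\<le>n. f a x j i * f b j y (n - i)) = f (a + b) x y n"
      by (simp add: f_def)
  qed
  also have "\<dots> = mexp I (mscale (a + b) A) x y"
    by (simp add: mexp_scale_eq f_def P_def)
  finally show "mmult I (mexp I (mscale a A)) (mexp I (mscale b A)) x y = mexp I (mscale (a + b) A) x y" .
qed

lemma mexp_zero: "eqon I (mexp I (mscale 0 A)) mone"
proof (rule eqonI)
  fix x y
  have "mexp I (mscale 0 A) x y = (\<Sum>k. (mpow I A k x y / of_nat (fact k)) * 0 ^ k)"
    by (simp add: mexp_scale_eq mult_ac)
  also have "\<dots> = mone x y" by (subst powser_zero) simp
  finally show "mexp I (mscale 0 A) x y = mone x y" .
qed


definition Eop :: "nat \<Rightarrow> (nat \<Rightarrow> nat \<Rightarrow> complex) \<Rightarrow> real \<Rightarrow> (nat \<Rightarrow> nat \<Rightarrow> complex)" where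
  "Eop d H a = mexp (sbasis d) (mscale (\<i> * complex_of_real a) H)"

lemma Eop_mult: "eqon (sbasis d) (mmult (sbasis d) (Eop d H a) (Eop d H b)) (Eop d H (a + b))"
proof -
  have "\<i> * complex_of_real a + \<i> * complex_of_real b = \<i> * complex_of_real (a + b)"
    by (simp add: distrib_left)
  then show ?thesis
    unfolding Eop_def using mexp_add[where I="sbasis d" and a="\<i> * complex_of_real a" and A=H and b="\<i> * complex_of_real b", OF finite_sbasis]
    by simp
qed

lemma Eop_zero: "eqon (sbasis d) (Eop d H 0) mone"
  unfolding Eop_def using mexp_zero by simp

lemma heis_Eop: "heis d H s A = mmult (sbasis d) (mmult (sbasis d) (Eop d H s) A) (Eop d H (- s))"
  by (simp add: heis_def Eop_def)

lemma heis_prod: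
  "eqon (sbasis d) (mprod (sbasis d) (map (\<lambda>t. heis d H (\<epsilon> * real t) (Os t)) (rev [0..<k])))
     (mmult (sbasis d) (Eop d H (\<epsilon> * real k)) (mprod (sbasis d) (map (\<lambda>t. mmult (sbasis d) (Eop d H (- \<epsilon>)) (Os t)) (rev [0..<k]))))"
proof (induction k)
  case 0
  have "eqon (sbasis d) mone (Eop d H 0)" by (rule eqon_sym[OF Eop_zero])
  also have "eqon (sbasis d) (Eop d H 0) (mmult (sbasis d) (Eop d H 0) mone)"
    by (rule eqon_sym[OF mmult_one_right]) simp
  finally show ?case by (simp add: mprod_Nil)
next
  case (Suc k)
  let ?S = "sbasis d"
  let ?E = "Eop d H"
  let ?Q = "mprod ?S (map (\<lambda>t. mmult ?S (?E (- \<epsilon>)) (Os t)) (rev [0..<k]))"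
  let ?a = "\<epsilon> * real k"
  have "mprod ?S (map (\<lambda>t. heis d H (\<epsilon> * real t) (Os t)) (rev [0..<Suc k]))
      = mmult ?S (heis d H ?a (Os k)) (mprod ?S (map (\<lambda>t. heis d H (\<epsilon> * real t) (Os t)) (rev [0..<k])))"
    by (simp add: mprod_Cons)
  also have "eqon ?S \<dots> (mmult ?S (heis d H ?a (Os k)) (mmult ?S (?E ?a) ?Q))"
    by (rule mmult_cong[OF eqon_refl Suc])
  also have "\<dots> = mmult ?S (?E ?a) (mmult ?S (Os k) (mmult ?S (mmult ?S (?E (- ?a)) (?E ?a)) ?Q))"
    by (simp only: heis_Eop mmult_assoc)
  also have "eqon ?S \<dots> (mmult ?S (?E ?a) (mmult ?S (Os k) (mmult ?S mone ?Q)))"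
  proof -
    have "eqon ?S (mmult ?S (?E (- ?a)) (?E ?a)) (?E (- ?a + ?a))" by (rule Eop_mult)
    then have "eqon ?S (mmult ?S (?E (- ?a)) (?E ?a)) (?E 0)" by simp
    then have "eqon ?S (mmult ?S (?E (- ?a)) (?E ?a)) mone" using Eop_zero eqon_trans by blast
    then show ?thesis by (rule mmult_cong[OF eqon_refl mmult_cong[OF eqon_refl mmult_cong[OF _ eqon_refl]]])
  qed
  also have "eqon ?S \<dots> (mmult ?S (?E ?a) (mmult ?S (Os k) ?Q))"
    by (intro mmult_cong eqon_refl mmult_one_left) simp
  also have "eqon ?S \<dots> (mmult ?S (mmult ?S (?E (\<epsilon> * real (Suc k))) (?E (- \<epsilon>))) (mmult ?S (Os k) ?Q))"
  proof -
    have "eqon ?S (mmult ?S (?E (\<epsilon> * real (Suc k))) (?E (- \<epsilon>))) (?E ?a)"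
    proof -
      have e: "\<epsilon> * real (Suc k) + - \<epsilon> = \<epsilon> * real k" by (simp add: algebra_simps)
      show ?thesis using Eop_mult[of d H "\<epsilon> * real (Suc k)" "- \<epsilon>"] by (simp only: e)
    qed
    then show ?thesis by (rule mmult_cong[OF eqon_sym eqon_refl])
  qed
  also have "\<dots> = mmult ?S (?E (\<epsilon> * real (Suc k)))
      (mprod ?S (map (\<lambda>t. mmult ?S (?E (- \<epsilon>)) (Os t)) (rev [0..<Suc k])))"
    by (simp add: mprod_Cons mmult_assoc)
  finally show ?case .
qed

lemma mprod_last_split:
  assumes "\<And>t. t \<ge> 1 \<Longrightarrow> eqon (sbasis d) (f t) (g t)"
    and "eqon (sbasis d) (f 0) (mmult (sbasis d) (g 0) Z)"
  shows "eqon (sbasis d) (mprod (sbasis d) (map f (rev [0..<Suc n])))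
           (mmult (sbasis d) (mprod (sbasis d) (map g (rev [0..<Suc n]))) Z)"
proof (induction n)
  case 0
  have "eqon (sbasis d) (mprod (sbasis d) [f 0]) (f 0)" by (rule mprod_single) simp
  also have "eqon (sbasis d) (f 0) (mmult (sbasis d) (g 0) Z)" by (rule assms(2))
  also have "eqon (sbasis d) (mmult (sbasis d) (g 0) Z) (mmult (sbasis d) (mprod (sbasis d) [g 0]) Z)"
    by (intro mmult_cong eqon_refl eqon_sym[OF mprod_single]) simp
  finally show ?case by simp
next
  case (Suc n)
  have r: "rev [0..<Suc (Suc n)] = Suc n # rev [0..<Suc n]" by simp
  have "mprod (sbasis d) (map f (rev [0..<Suc (Suc n)]))
       = mmult (sbasis d) (f (Suc n)) (mprod (sbasis d) (map f (rev [0..<Suc n])))"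
    by (simp only: r list.map mprod_Cons)
  also have "eqon (sbasis d) \<dots> (mmult (sbasis d) (g (Suc n)) (mmult (sbasis d) (mprod (sbasis d) (map g (rev [0..<Suc n]))) Z))"
    by (intro mmult_cong Suc assms(1)) simp
  also have "\<dots> = mmult (sbasis d) (mprod (sbasis d) (map g (rev [0..<Suc (Suc n)]))) Z"
    by (simp only: r list.map mprod_Cons mmult_assoc)
  finally show ?case .
qed


lemma choi_apply: "e \<in> I \<Longrightarrow> finite I \<Longrightarrow> choi I X (x, e) = X x e"
  unfolding choi_def apply_sys_def phi_plus_def
  by (simp add: if_distrib[of "\<lambda>c. _ * c"] cong: if_cong)

lemma choi_vinner:
  assumes fin: "finite I"
  shows "vinner I (choi I (madj A)) (choi I B) = mtrace I (mmult I A B)"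
proof -
  have "vinner I (choi I (madj A)) (choi I B) = (\<Sum>(x,e)\<in>I \<times> I. A e x * B x e)"
    unfolding vinner_def
    by (rule sum.cong[OF refl]) (auto simp: choi_apply fin madj_def)
  also have "\<dots> = (\<Sum>x\<in>I. \<Sum>e\<in>I. A e x * B x e)"
    by (rule sum.cartesian_product[symmetric])
  also have "\<dots> = (\<Sum>e\<in>I. \<Sum>x\<in>I. A e x * B x e)" by (rule sum.swap)
  finally show ?thesis by (simp add: mtrace_def mmult_def)
qed

theorem corollary3:
  fixes d N :: nat and \<epsilon> :: real
    and H \<rho> :: "nat \<Rightarrow> nat \<Rightarrow> complex"
    and Os :: "nat \<Rightarrow> nat \<Rightarrow> nat \<Rightarrow> complex"
  assumes "d \<ge> 1" and "N \<ge> 1" and "\<epsilon> > 0"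
    and herm: "\<forall>i<d. \<forall>j<d. H i j = cnj (H j i)"
  shows "vinner (tbasis d N)
           (choi (tbasis d N) (madj (tensor_op N Os)))
           (choi (tbasis d N) (mmult (tbasis d N) (local_op N 0 \<rho>) (expiS_tilde d N \<epsilon> H)))
       = mtrace (sbasis d)
           (mmult (sbasis d) \<rho>
              (mprod (sbasis d) (map (\<lambda>t. heis d H (\<epsilon> * real t) (Os t)) (rev [0..<N]))))"
proof -
  obtain n where Nn: "N = Suc n" using assms(2) by (cases N) auto
  have N0: "0 < N" using assms(2) by simp
  let ?S = "sbasis d" and ?T = "tbasis d N"
  define TO where "TO = tensor_op N Os"
  define R where "R = local_op N 0 \<rho>"
  define Vt where "Vt = mexp ?T (mscale (\<i> * complex_of_real (\<epsilon> * real N)) (local_op N 0 H))"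
  define Pt where "Pt = mprod ?T (map (\<lambda>t. mexp ?T (mscale (- \<i> * complex_of_real \<epsilon>) (local_op N t H))) [0..<N])"
  define U0 where "U0 = Eop d H (- \<epsilon>)"
  define V0 where "V0 = Eop d H (\<epsilon> * real N)"
  define Rf where "Rf = (\<lambda>s::nat. if s = 0 then \<rho> else mone)"
  define Vf where "Vf = (\<lambda>s::nat. if s = 0 then V0 else mone)"
  define M where "M = (\<lambda>s. mmult ?S U0 (mmult ?S (mmult ?S (Os s) (Rf s)) (Vf s)))"
  define Q where "Q = mprod ?S (map (\<lambda>t. mmult ?S U0 (Os t)) (rev [0..<N]))"
  have ets: "expiS_tilde d N \<epsilon> H = mmult ?T Vt (mmult ?T cshift Pt)"
    by (simp add: expiS_tilde_def expiS_def Vt_def Pt_def)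
  have "vinner ?T (choi ?T (madj (tensor_op N Os))) (choi ?T (mmult ?T (local_op N 0 \<rho>) (expiS_tilde d N \<epsilon> H)))
      = mtrace ?T (mmult ?T TO (mmult ?T R (mmult ?T Vt (mmult ?T cshift Pt))))"
    by (simp add: choi_vinner ets TO_def R_def)
  also have "\<dots> = mtrace ?T (mmult ?T Pt (mmult ?T (mmult ?T (mmult ?T TO R) Vt) cshift))"
    by (simp only: mtrace_comm[of ?T Pt] mmult_assoc)
  also have "\<dots> = mtrace ?T (mmult ?T (mmult ?T Pt (mmult ?T (mmult ?T TO R) Vt)) cshift)"
    by (simp only: mmult_assoc)
  also have "\<dots> = mtrace ?T (mmult ?T (tensor_op N M) cshift)"
  proof (rule mtrace_cong, rule mmult_cong[OF _ eqon_refl])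
    have Pt_eq: "eqon ?T Pt (tensor_op N (\<lambda>_. U0))"
    proof -
      have "eqon ?T Pt (mprod ?T (map (\<lambda>t. local_op N t U0) [0..<N]))"
        unfolding Pt_def
      proof (rule mprod_cong)
        fix t assume "t \<in> set [0..<N]"
        then have t: "t < N" by simp
        have "mexp ?T (mscale (- \<i> * complex_of_real \<epsilon>) (local_op N t H))
            = mexp ?T (local_op N t (mscale (- \<i> * complex_of_real \<epsilon>) H))"
          by (simp add: mscale_local)
        also have "eqon ?T \<dots> (local_op N t (mexp ?S (mscale (- \<i> * complex_of_real \<epsilon>) H)))"
          by (rule mexp_local[OF t])
        also have "mexp ?S (mscale (- \<i> * complex_of_real \<epsilon>) H) = U0"
          by (simp add: U0_def Eop_def)
        finally show "eqon ?T (mexp ?T (mscale (- \<i> * complex_of_real \<epsilon>) (local_op N t H))) (local_op N t U0)" .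
      qed
      also have "eqon ?T \<dots> (tensor_op N (\<lambda>s. if 0 \<le> s then U0 else mone))"
        by (rule mprod_locals) simp
      finally show ?thesis by simp
    qed
    have R_eq: "R = tensor_op N Rf"
      by (simp add: R_def Rf_def local_as_tensor[OF N0])
    have Vt_eq: "eqon ?T Vt (tensor_op N Vf)"
    proof -
      have "Vt = mexp ?T (local_op N 0 (mscale (\<i> * complex_of_real (\<epsilon> * real N)) H))"
        by (simp add: Vt_def mscale_local)
      also have "eqon ?T \<dots> (local_op N 0 V0)"
        unfolding V0_def Eop_def by (rule mexp_local[OF N0])
      also have "\<dots> = tensor_op N Vf"
        by (simp add: Vf_def local_as_tensor[OF N0])
      finally show ?thesis .
    qed
    have "eqon ?T (mmult ?T TO R) (tensor_op N (\<lambda>s. mmult ?S (Os s) (Rf s)))"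
      unfolding TO_def R_eq by (rule tensor_mult_eqon)
    then have "eqon ?T (mmult ?T (mmult ?T TO R) Vt)
        (mmult ?T (tensor_op N (\<lambda>s. mmult ?S (Os s) (Rf s))) (tensor_op N Vf))"
      by (rule mmult_cong[OF _ Vt_eq])
    also have "eqon ?T \<dots> (tensor_op N (\<lambda>s. mmult ?S (mmult ?S (Os s) (Rf s)) (Vf s)))"
      by (rule tensor_mult_eqon)
    finally have X: "eqon ?T (mmult ?T (mmult ?T TO R) Vt) (tensor_op N (\<lambda>s. mmult ?S (mmult ?S (Os s) (Rf s)) (Vf s)))" .
    have "eqon ?T (mmult ?T Pt (mmult ?T (mmult ?T TO R) Vt))
        (mmult ?T (tensor_op N (\<lambda>_. U0)) (tensor_op N (\<lambda>s. mmult ?S (mmult ?S (Os s) (Rf s)) (Vf s))))"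
      by (rule mmult_cong[OF Pt_eq X])
    also have "eqon ?T \<dots> (tensor_op N M)"
      unfolding M_def by (rule tensor_mult_eqon)
    finally show "eqon ?T (mmult ?T Pt (mmult ?T (mmult ?T TO R) Vt)) (tensor_op N M)" .
  qed
  also have "\<dots> = mtrace ?S (mprod ?S (map M (rev [0..<N])))"
    unfolding Nn by (rule cshift_trace)
  also have "\<dots> = mtrace ?S (mmult ?S Q (mmult ?S \<rho> V0))"
  proof (rule mtrace_cong)
    have "eqon ?S (mprod ?S (map M (rev [0..<Suc n]))) (mmult ?S (mprod ?S (map (\<lambda>t. mmult ?S U0 (Os t)) (rev [0..<Suc n]))) (mmult ?S \<rho> V0))"
    proof (rule mprod_last_split)
      fix t :: nat assume "1 \<le> t"
      then have "M t = mmult ?S U0 (mmult ?S (mmult ?S (Os t) mone) mone)"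
        by (simp add: M_def Rf_def Vf_def)
      also have "eqon ?S \<dots> (mmult ?S U0 (Os t))"
        by (rule mmult_cong[OF eqon_refl eqon_trans[OF mmult_one_right mmult_one_right]]) simp_all
      finally show "eqon ?S (M t) (mmult ?S U0 (Os t))" .
    next
      show "eqon ?S (M 0) (mmult ?S (mmult ?S U0 (Os 0)) (mmult ?S \<rho> V0))"
        by (simp add: M_def Rf_def Vf_def mmult_assoc)
    qed
    then show "eqon ?S (mprod ?S (map M (rev [0..<N]))) (mmult ?S Q (mmult ?S \<rho> V0))"
      by (simp only: Nn Q_def)
  qed
  also have "\<dots> = mtrace ?S (mmult ?S \<rho> (mmult ?S V0 Q))"
    by (simp only: mtrace_comm[of ?S Q] mmult_assoc)
  also have "\<dots> = mtrace ?S (mmult ?S \<rho> (mprod ?S (map (\<lambda>t. heis d H (\<epsilon> * real t) (Os t)) (rev [0..<N]))))"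
    unfolding V0_def Q_def U0_def
    by (rule mtrace_cong[OF mmult_cong[OF eqon_refl eqon_sym[OF heis_prod]]])
  finally show ?thesis .
qed

end
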